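(* For every nonnegative integer $p$ and every $k\in\mathbb{Z}$, the generalized energy operators $[[\cdot]^p]_k^{+}$ and $[[\cdot]^p]_k^{-}$ are bilinear and satisfy the derivative chain rule property: for every $f\in\mathbf{S}^-(\mathbb{R})$, writing $g=[[f]^{p-1}]_k^{\pm}$ (with $g=f$ when $p=0$), so that $[[f]^p]_k^{\pm}=[g,g]_k^{\pm}$, $$\partial_t[g,g]_k^{\pm}=[g,g]_{k+1}^{\pm}+[\partial_t g,\partial_t g]_{k-1}^{\pm},$$ which the paper writes as $\partial_t[[f]^p]_k^{\pm}=[[f]^p]_{k+1}^{\pm}+[\partial_t[f]^p]_{k-1}^{\pm}$.
   Context: $\mathbf{S}^{-}(\mathbb{R})=\{f\in C^\infty(\mathbb{R}) : \sup_{t<0}|t|^k|\partial_t^j f(t)|<\infty \text{ for all } k,j\ge 0\}$. For $k\in\mathbb{Z}$, $\partial_t^k$ is the $k$-th derivative when $k\ge0$ and the $|k|$-fold iterated antiderivative $\int_{-\infty}^t$ when $k<0$. For $k\in\mathbb{Z}$, $[g,h]_k^{\pm}=\partial_t g\,\partial_t^{k-1}h\pm g\,\partial_t^k h$. The energy operators are $\Psi_k^{\pm}(f)=[f,f]_k^{\pm}=:[[f]^0]_k^{\pm}$, and the generalized energy operators are defined recursively by $[[f]^{p+1}]_k^{\pm}=\big[[[f]^{p}]_k^{\pm},[[f]^{p}]_k^{\pm}\big]_k^{\pm}$. Bilinearity is in the sense used by the paper: a map $B:\mathbf{V}\times\mathbf{V}\to\mathbf{S}^-(\mathbb{R})$ ($\mathbf{V}\subseteq\mathbf{S}^-(\mathbb{R})$)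 is bilinear if $B(v_1+v_2,w)=B(v_1,w)+B(v_2,w)$, $B(v,w_1+w_2)=B(v,w_1)+B(v,w_2)$ and $B(cv,w)=B(v,cw)=cB(v,w)$ for $c\in\mathbb{R}$; an operator of the form $f\mapsto B(f,f)$ built from such brackets (as $\Psi_k^{\pm}$ is from $[\cdot,\cdot]_k^{\pm}$) is called bilinear. *)

theory Defs
  imports "HOL-Analysis.Analysis"
begin

definition smooth_fun :: "(real \<Rightarrow> real) \<Rightarrow> bool" where
  "smooth_fun f \<longleftrightarrow> (\<forall>j x. ((deriv ^^ j) f) differentiable (at x))"

definition Sminus :: "(real \<Rightarrow> real) set" where
  "Sminus = {f. smooth_fun f \<and>
     (\<forall>k j::nat. \<exists>C. \<forall>t<0. \<bar>t\<bar> ^ k * \<bar>((deriv ^^ j) f) t\<bar> \<le> C)}"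

definition antideriv :: "(real \<Rightarrow> real) \<Rightarrow> (real \<Rightarrow> real)" where
  "antideriv f = (\<lambda>t. integral {..t} f)"

definition dk :: "int \<Rightarrow> (real \<Rightarrow> real) \<Rightarrow> (real \<Rightarrow> real)" where
  "dk k f = (if 0 \<le> k then (deriv ^^ nat k) f else (antideriv ^^ nat (- k)) f)"

text \<open>The bracket [g,h]_k with sign s (s = 1 for +, s = -1 for -).\<close>
definition bracket :: "int \<Rightarrow> real \<Rightarrow> (real \<Rightarrow> real) \<Rightarrow> (real \<Rightarrow> real) \<Rightarrow> (real \<Rightarrow> real)" where
  "bracket k s g h = (\<lambda>t. deriv g t * dk (k - 1) h t + s * (g t * dk k h t))"

fun gen :: "nat \<Rightarrow> int \<Rightarrow> real \<Rightarrow> (real \<Rightarrow> real) \<Rightarrow> (real \<Rightarrow> real)" where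
  "gen 0 k s f = bracket k s f f"
| "gen (Suc p) k s f = bracket k s (gen p k s f) (gen p k s f)"

definition bilinear_on :: "(real \<Rightarrow> real) set \<Rightarrow> ((real \<Rightarrow> real) \<Rightarrow> (real \<Rightarrow> real) \<Rightarrow> (real \<Rightarrow> real)) \<Rightarrow> bool" where
  "bilinear_on V B \<longleftrightarrow>
     (\<forall>v\<in>V. \<forall>w\<in>V. B v w \<in> Sminus) \<and>
     (\<forall>v1\<in>V. \<forall>v2\<in>V. \<forall>w\<in>V. B (\<lambda>t. v1 t + v2 t) w = (\<lambda>t. B v1 w t + B v2 w t)) \<and>
     (\<forall>v\<in>V. \<forall>w1\<in>V. \<forall>w2\<in>V. B v (\<lambda>t. w1 t + w2 t) = (\<lambda>t. B v w1 t + B v w2 t)) \<and>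
     (\<forall>v\<in>V. \<forall>w\<in>V. \<forall>c::real. B (\<lambda>t. c * v t) w = (\<lambda>t. c * B v w t) \<and>
                                B v (\<lambda>t. c * w t) = (\<lambda>t. c * B v w t))"

end

theory Submission
  imports Defs
begin

definition RD :: "(real \<Rightarrow> real) \<Rightarrow> bool" where
  "RD h \<longleftrightarrow> (\<forall>k::nat. \<exists>C. \<forall>t<0. \<bar>t\<bar> ^ k * \<bar>h t\<bar> \<le> C)"

lemma inv_sq_absint: "(\<lambda>x::real. 1 / x^2) absolutely_integrable_on {..-1}"
proof -
  have "(\<lambda>x::real. 1 / x^2) integrable_on {1..}"
    using has_integral_inverse_power_to_inf[of 2 1] by (auto simp: integrable_on_def)
  hence a: "(\<lambda>x::real. 1 / x^2) absolutely_integrable_on {1..}"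
    by (rule nonnegative_absolutely_integrable_1) auto
  have "(\<lambda>x. (\<lambda>x::real. 1 / x^2) (-x)) absolutely_integrable_on {..-1}"
    using has_absolute_integral_reflect_real[of "{..-1}" "{1..}" "\<lambda>x::real. 1 / x^2"
       "integral {1..} (\<lambda>x::real. 1 / x^2)"] a
    by (force simp: image_iff)
  thus ?thesis by simp
qed

lemma RD_absint:
  assumes c: "continuous_on UNIV h" and r: "RD h"
  shows "h absolutely_integrable_on {..t}"
proof -
  obtain C where C: "\<And>u. u < 0 \<Longrightarrow> \<bar>u\<bar>^2 * \<bar>h u\<bar> \<le> C"
    using r unfolding RD_def by blast
  have g: "(\<lambda>x::real. C * (1 / x^2)) integrable_on {..-1}"
    using inv_sq_absint set_lebesgue_integral_eq_integral(1) integrable_on_cmult_left by blast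
  have m: "h \<in> borel_measurable (lebesgue_on {..-1})"
    by (rule continuous_imp_measurable_on_sets_lebesgue) (auto intro: continuous_on_subset[OF c])
  have b: "norm (h x) \<le> C * (1 / x^2)" if "x \<in> {..-1}" for x
  proof -
    from that have "x < 0" by auto
    from C[OF this] have "x^2 * \<bar>h x\<bar> \<le> C" by simp
    moreover have "x^2 > 0" using \<open>x<0\<close> by simp
    ultimately show ?thesis by (simp add: field_simps)
  qed
  have h1: "h absolutely_integrable_on {..-1}"
    by (rule measurable_bounded_by_integrable_imp_absolutely_integrable[OF m _ g b]) auto
  show ?thesis
  proof (cases "t \<le> -1")
    case True
    then show ?thesis by (intro set_integrable_subset[OF h1]) auto
  next
    case False
    have "h absolutely_integrable_on {-1..t}"
      by (rule absolutely_integrable_continuous_real) (auto intro: continuous_on_subset[OF c])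
    moreover have "{..t} = {..-1} \<union> {-1..t}" using False by auto
    ultimately show ?thesis using absolutely_integrable_Un[OF h1] by metis
  qed
qed

lemma RD_int: "continuous_on UNIV h \<Longrightarrow> RD h \<Longrightarrow> h integrable_on {..t}"
  using RD_absint set_lebesgue_integral_eq_integral(1) by blast

lemma integral_cmult_real: "integral S (\<lambda>x. c * f x) = c * integral S (f::real\<Rightarrow>real)"
  using integral_cmul[of S c f] by simp

lemma antideriv_has_deriv:
  assumes c: "continuous_on UNIV h" and r: "RD h"
  shows "(antideriv h has_real_derivative h t) (at t)"
proof -
  define a where "a = t - 1"
  define b where "b = t + 1"
  have eq: "antideriv h x = integral {..a} h + integral {a..x} h" if "x \<in> {a<..<b}" for x
  proof -
    have "(h has_integral (integral {..a} h + integral {a..x} h)) ({..a} \<union> {a..x})"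
      apply (rule has_integral_Un)
      using RD_int[OF c r] integrable_continuous_interval[OF continuous_on_subset[OF c]]
      apply (auto simp: has_integral_integral)
      apply (rule negligible_subset[of "{a}"]) using that by auto
    moreover have "{..a} \<union> {a..x} = {..x}" using that by auto
    ultimately show ?thesis unfolding antideriv_def by (simp add: integral_unique)
  qed
  have "((\<lambda>x. integral {a..x} h) has_real_derivative h t) (at t within {a..b})"
    by (rule integral_has_real_derivative) (auto simp: a_def b_def intro: continuous_on_subset[OF c])
  moreover have "at t within {a..b} = at t"
    by (rule at_within_Icc_at) (auto simp: a_def b_def)
  ultimately have "((\<lambda>x. integral {..a} h + integral {a..x} h) has_real_derivative h t) (at t)"
    using DERIV_add[OF DERIV_const] by fastforce
  then show ?thesis
    by (rule has_field_derivative_transform_within_open[of _ _ _ "{a<..<b}"])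
       (auto simp: a_def b_def eq)
qed

lemma RD_antideriv:
  assumes c: "continuous_on UNIV h" and r: "RD h"
  shows "RD (antideriv h)"
  unfolding RD_def
proof
  fix k :: nat
  define \<phi> where "\<phi> = (\<lambda>u::real. \<bar>u\<bar>^k * \<bar>h u\<bar>)"
  have c\<phi>: "continuous_on UNIV \<phi>" unfolding \<phi>_def by (intro continuous_intros c)
  have r\<phi>: "RD \<phi>" unfolding RD_def
  proof
    fix m
    from r obtain C where C: "\<forall>t<0. \<bar>t\<bar>^(m+k) * \<bar>h t\<bar> \<le> C" unfolding RD_def by blast
    have eq: "\<bar>t\<bar> ^ m * \<bar>\<phi> t\<bar> = \<bar>t\<bar>^(m+k) * \<bar>h t\<bar>" for t
      unfolding \<phi>_def power_add abs_mult by simp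
    show "\<exists>C. \<forall>t<0. \<bar>t\<bar> ^ m * \<bar>\<phi> t\<bar> \<le> C"
    proof (intro exI allI impI)
      fix t :: real assume "t < 0"
      then show "\<bar>t\<bar> ^ m * \<bar>\<phi> t\<bar> \<le> C" unfolding eq using C by blast
    qed
  qed
  have "\<bar>t\<bar>^k * \<bar>antideriv h t\<bar> \<le> integral {..0} \<phi>" if "t < 0" for t
  proof -
    have "\<bar>t\<bar>^k * \<bar>antideriv h t\<bar> = norm (integral {..t} (\<lambda>u. \<bar>t\<bar>^k * h u))"
    proof -
      have e: "\<bar>\<bar>t\<bar>^k\<bar> = \<bar>t\<bar>^k" by simp
      show ?thesis unfolding antideriv_def integral_cmult_real real_norm_def abs_mult e ..
    qed
    also have "\<dots> \<le> integral {..t} \<phi>"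
    proof (rule integral_norm_bound_integral)
      show "(\<lambda>u. \<bar>t\<bar>^k * h u) integrable_on {..t}"
        by (rule integrable_on_mult_right[OF RD_int[OF c r]])
      show "\<phi> integrable_on {..t}" using RD_int[OF c\<phi> r\<phi>] .
      fix u assume "u \<in> {..t}"
      then have "\<bar>t\<bar>^k \<le> \<bar>u\<bar>^k" using that by (intro power_mono) simp_all
      then show "norm (\<bar>t\<bar>^k * h u) \<le> \<phi> u"
        by (auto simp: \<phi>_def abs_mult intro: mult_right_mono)
    qed
    also have "\<dots> \<le> integral {..0} \<phi>"
      by (rule integral_subset_le) (use that RD_int[OF c\<phi> r\<phi>] in \<open>auto simp: \<phi>_def\<close>)
    finally show ?thesis .
  qed
  then show "\<exists>C. \<forall>t<0. \<bar>t\<bar> ^ k * \<bar>antideriv h t\<bar> \<le> C" by blast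
qed

lemma RD_add: "RD f \<Longrightarrow> RD g \<Longrightarrow> RD (\<lambda>t. f t + g t)"
  unfolding RD_def
proof
  fix k assume f: "\<forall>k. \<exists>C. \<forall>t<0. \<bar>t\<bar> ^ k * \<bar>f t\<bar> \<le> C" and g: "\<forall>k. \<exists>C. \<forall>t<0. \<bar>t\<bar> ^ k * \<bar>g t\<bar> \<le> C"
  obtain A where A: "\<forall>t<0. \<bar>t\<bar> ^ k * \<bar>f t\<bar> \<le> A" using f by blast
  obtain B where B: "\<forall>t<0. \<bar>t\<bar> ^ k * \<bar>g t\<bar> \<le> B" using g by blast
  have "\<bar>t\<bar> ^ k * \<bar>f t + g t\<bar> \<le> A + B" if "t < 0" for t
  proof -
    have "\<bar>t\<bar> ^ k * \<bar>f t + g t\<bar> \<le> \<bar>t\<bar> ^ k * (\<bar>f t\<bar> + \<bar>g t\<bar>)"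
      by (intro mult_left_mono abs_triangle_ineq) simp
    also have "\<dots> \<le> A + B" using A B that by (simp add: distrib_left add_mono)
    finally show ?thesis .
  qed
  then show "\<exists>C. \<forall>t<0. \<bar>t\<bar> ^ k * \<bar>f t + g t\<bar> \<le> C" by blast
qed

lemma RD_cmult: "RD f \<Longrightarrow> RD (\<lambda>t. c * f t)"
  unfolding RD_def
proof
  fix k assume f: "\<forall>k. \<exists>C. \<forall>t<0. \<bar>t\<bar> ^ k * \<bar>f t\<bar> \<le> C"
  obtain A where A: "\<forall>t<0. \<bar>t\<bar> ^ k * \<bar>f t\<bar> \<le> A" using f by blast
  have "\<bar>t\<bar> ^ k * \<bar>c * f t\<bar> \<le> \<bar>c\<bar> * A" if "t < 0" for t
  proof -
    have "\<bar>t\<bar> ^ k * \<bar>c * f t\<bar> = \<bar>c\<bar> * (\<bar>t\<bar> ^ k * \<bar>f t\<bar>)" by (simp add: abs_mult)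
    also have "\<dots> \<le> \<bar>c\<bar> * A" using A that by (intro mult_left_mono) auto
    finally show ?thesis .
  qed
  then show "\<exists>C. \<forall>t<0. \<bar>t\<bar> ^ k * \<bar>c * f t\<bar> \<le> C" by blast
qed

lemma RD_mult: "RD f \<Longrightarrow> RD g \<Longrightarrow> RD (\<lambda>t. f t * g t)"
  unfolding RD_def
proof
  fix k assume f: "\<forall>k. \<exists>C. \<forall>t<0. \<bar>t\<bar> ^ k * \<bar>f t\<bar> \<le> C" and g: "\<forall>k. \<exists>C. \<forall>t<0. \<bar>t\<bar> ^ k * \<bar>g t\<bar> \<le> C"
  obtain A where A: "\<forall>t<0. \<bar>t\<bar> ^ k * \<bar>f t\<bar> \<le> A" using f by blast
  obtain B where B: "\<forall>t<0. \<bar>t\<bar> ^ 0 * \<bar>g t\<bar> \<le> B" using g by blast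
  have "\<bar>t\<bar> ^ k * \<bar>f t * g t\<bar> \<le> A * B" if "t < 0" for t
  proof -
    have "\<bar>t\<bar> ^ k * \<bar>f t * g t\<bar> = (\<bar>t\<bar> ^ k * \<bar>f t\<bar>) * \<bar>g t\<bar>" by (simp add: abs_mult)
    also have "\<dots> \<le> A * B"
    proof (rule mult_mono)
      show "\<bar>t\<bar> ^ k * \<bar>f t\<bar> \<le> A" using A that by blast
      show "\<bar>g t\<bar> \<le> B" using B that by simp
      have "0 \<le> \<bar>t\<bar> ^ k * \<bar>f t\<bar>" by simp
      moreover have "\<bar>t\<bar> ^ k * \<bar>f t\<bar> \<le> A" using A that by blast
      ultimately show "0 \<le> A" by linarith
    qed simp
    finally show ?thesis .
  qed
  then show "\<exists>C. \<forall>t<0. \<bar>t\<bar> ^ k * \<bar>f t * g t\<bar> \<le> C" by blast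
qed

lemma RD_zero: "RD (\<lambda>t. 0)"
  unfolding RD_def by auto

lemma Sminus_iff: "f \<in> Sminus \<longleftrightarrow> (\<forall>j. (\<forall>x. (deriv ^^ j) f differentiable (at x)) \<and> RD ((deriv ^^ j) f))"
  unfolding Sminus_def smooth_fun_def RD_def by blast

lemma S_derivs:
  assumes F0: "F 0 = f"
    and D: "\<And>j t. (F j has_real_derivative F (Suc j) t) (at t)"
    and R: "\<And>j. RD (F j)"
  shows "f \<in> Sminus" and "(deriv ^^ j) f = F j"
proof -
  have eq: "(deriv ^^ j) f = F j" for j
  proof (induction j)
    case 0 then show ?case using F0 by simp
  next
    case (Suc j)
    have "deriv (F j) = F (Suc j)" using D by (intro ext DERIV_imp_deriv)
    then show ?case using Suc by simp
  qed
  show "(deriv ^^ j) f = F j" by (rule eq)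
  show "f \<in> Sminus" unfolding Sminus_iff eq
    using D R real_differentiable_def by blast
qed

lemma S_has_deriv:
  assumes "f \<in> Sminus"
  shows "((deriv ^^ j) f has_real_derivative (deriv ^^ Suc j) f t) (at t)"
proof -
  have "(deriv ^^ j) f differentiable (at t)" using assms unfolding Sminus_iff by blast
  then show ?thesis by (simp add: DERIV_deriv_iff_real_differentiable)
qed

lemma S_has_deriv0:
  assumes "f \<in> Sminus"
  shows "(f has_real_derivative deriv f t) (at t)"
  using S_has_deriv[OF assms, of 0] by simp

lemma S_RD: "f \<in> Sminus \<Longrightarrow> RD ((deriv ^^ j) f)"
  unfolding Sminus_iff by blast

lemma S_RD0: "f \<in> Sminus \<Longrightarrow> RD f"
  using S_RD[of f 0] by simp

lemma S_cont: "f \<in> Sminus \<Longrightarrow> continuous_on UNIV f"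
  using S_has_deriv0 by (meson DERIV_continuous continuous_at_imp_continuous_on)

lemma deriv_S: assumes "f \<in> Sminus" shows "deriv f \<in> Sminus"
proof (rule S_derivs(1)[where F="\<lambda>j. (deriv ^^ Suc j) f"])
  show "(deriv ^^ Suc 0) f = deriv f" by simp
  fix j t
  show "((deriv ^^ Suc j) f has_real_derivative (deriv ^^ Suc (Suc j)) f t) (at t)"
    by (rule S_has_deriv[OF assms])
  show "RD ((deriv ^^ Suc j) f)" by (rule S_RD[OF assms])
qed

lemma S_add:
  assumes f: "f \<in> Sminus" and g: "g \<in> Sminus"
  shows "(\<lambda>t. f t + g t) \<in> Sminus"
    and "(deriv ^^ j) (\<lambda>t. f t + g t) = (\<lambda>t. (deriv ^^ j) f t + (deriv ^^ j) g t)"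
proof -
  let ?F = "\<lambda>j t. (deriv ^^ j) f t + (deriv ^^ j) g t"
  have 1: "?F 0 = (\<lambda>t. f t + g t)" by simp
  have 2: "(?F j has_real_derivative ?F (Suc j) t) (at t)" for j t
    using DERIV_add[OF S_has_deriv[OF f] S_has_deriv[OF g]] by simp
  have 3: "RD (?F j)" for j by (intro RD_add S_RD f g)
  show "(\<lambda>t. f t + g t) \<in> Sminus" by (rule S_derivs(1)[OF 1 2 3])
  show "(deriv ^^ j) (\<lambda>t. f t + g t) = ?F j" by (rule S_derivs(2)[OF 1 2 3])
qed

lemma S_cmult:
  assumes f: "f \<in> Sminus"
  shows "(\<lambda>t. c * f t) \<in> Sminus"
    and "(deriv ^^ j) (\<lambda>t. c * f t) = (\<lambda>t. c * (deriv ^^ j) f t)"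
proof -
  let ?F = "\<lambda>j t. c * (deriv ^^ j) f t"
  have 1: "?F 0 = (\<lambda>t. c * f t)" by simp
  have 2: "(?F j has_real_derivative ?F (Suc j) t) (at t)" for j t
    using DERIV_cmult[OF S_has_deriv[OF f]] by simp
  have 3: "RD (?F j)" for j by (intro RD_cmult S_RD f)
  show "(\<lambda>t. c * f t) \<in> Sminus" by (rule S_derivs(1)[OF 1 2 3])
  show "(deriv ^^ j) (\<lambda>t. c * f t) = ?F j" by (rule S_derivs(2)[OF 1 2 3])
qed

fun Lst :: "nat \<Rightarrow> (nat \<times> nat) list" where
  "Lst 0 = [(0,0)]"
| "Lst (Suc j) = concat (map (\<lambda>(a,b). [(Suc a, b), (a, Suc b)]) (Lst j))"

definition PS :: "(real \<Rightarrow> real) \<Rightarrow> (real \<Rightarrow> real) \<Rightarrow> (nat \<times> nat) list \<Rightarrow> real \<Rightarrow> real" where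
  "PS f g xs = (\<lambda>t. sum_list (map (\<lambda>(a,b). (deriv ^^ a) f t * (deriv ^^ b) g t) xs))"

lemma PS_deriv:
  assumes f: "f \<in> Sminus" and g: "g \<in> Sminus"
  shows "(PS f g xs has_real_derivative
           PS f g (concat (map (\<lambda>(a,b). [(Suc a, b), (a, Suc b)]) xs)) t) (at t)"
proof (induction xs)
  case Nil
  then show ?case by (simp add: PS_def)
next
  case (Cons p xs)
  obtain a b where p: "p = (a,b)" by fastforce
  have "((\<lambda>t. (deriv ^^ a) f t * (deriv ^^ b) g t) has_real_derivative
          (deriv ^^ Suc a) f t * (deriv ^^ b) g t + (deriv ^^ Suc b) g t * (deriv ^^ a) f t) (at t)"
    by (rule DERIV_mult[OF S_has_deriv[OF f] S_has_deriv[OF g]])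
  from DERIV_add[OF this Cons.IH] show ?case
    by (simp add: p PS_def algebra_simps)
qed

lemma PS_RD:
  assumes f: "f \<in> Sminus" and g: "g \<in> Sminus"
  shows "RD (PS f g xs)"
proof (induction xs)
  case Nil
  then show ?case by (simp add: PS_def RD_zero)
next
  case (Cons p xs)
  obtain a b where p: "p = (a,b)" by fastforce
  have "RD (\<lambda>t. (deriv ^^ a) f t * (deriv ^^ b) g t + PS f g xs t)"
    by (intro RD_add RD_mult S_RD f g Cons.IH)
  then show ?case by (simp add: p PS_def)
qed

lemma S_mult:
  assumes f: "f \<in> Sminus" and g: "g \<in> Sminus"
  shows "(\<lambda>t. f t * g t) \<in> Sminus"
proof (rule S_derivs(1)[where F="\<lambda>j. PS f g (Lst j)"])
  show "PS f g (Lst 0) = (\<lambda>t. f t * g t)" by (simp add: PS_def)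
  fix j t
  show "(PS f g (Lst j) has_real_derivative PS f g (Lst (Suc j)) t) (at t)"
    using PS_deriv[OF f g] by simp
  show "RD (PS f g (Lst j))" by (rule PS_RD[OF f g])
qed

lemma antideriv_S:
  assumes f: "f \<in> Sminus"
  shows "antideriv f \<in> Sminus" and "deriv (antideriv f) = f"
proof -
  let ?F = "\<lambda>j. case j of 0 \<Rightarrow> antideriv f | Suc i \<Rightarrow> (deriv ^^ i) f"
  have 1: "?F 0 = antideriv f" by simp
  have 2: "(?F j has_real_derivative ?F (Suc j) t) (at t)" for j t
  proof (cases j)
    case 0
    then show ?thesis using antideriv_has_deriv[OF S_cont[OF f] S_RD0[OF f]] by simp
  next
    case (Suc i)
    then show ?thesis using S_has_deriv[OF f] by simp
  qed
  have 3: "RD (?F j)" for j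
    by (cases j) (auto intro: RD_antideriv S_cont S_RD S_RD0 f)
  show "antideriv f \<in> Sminus" by (rule S_derivs(1)[OF 1 2 3])
  show "deriv (antideriv f) = f" using S_derivs(2)[OF 1 2 3, of 1] by simp
qed

lemma antideriv_add:
  assumes f: "f \<in> Sminus" and g: "g \<in> Sminus"
  shows "antideriv (\<lambda>t. f t + g t) = (\<lambda>t. antideriv f t + antideriv g t)"
  unfolding antideriv_def
  by (intro ext integral_add RD_int S_cont S_RD0 f g)

lemma antideriv_cmult:
  shows "antideriv (\<lambda>t. c * f t) = (\<lambda>t. c * antideriv f t)"
  unfolding antideriv_def by (simp add: integral_cmult_real)

lemma antideriv_deriv:
  assumes f: "f \<in> Sminus"
  shows "antideriv (deriv f) = f"
proof -
  have df: "deriv f \<in> Sminus" by (rule deriv_S[OF f])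
  define h where "h = (\<lambda>t. antideriv (deriv f) t + (-1) * f t)"
  have hS: "h \<in> Sminus" unfolding h_def
    by (intro S_add S_cmult antideriv_S df f)
  have "(h has_real_derivative 0) (at t)" for t
  proof -
    have "(h has_real_derivative deriv f t + (-1) * deriv f t) (at t)"
      unfolding h_def
      by (intro DERIV_add DERIV_cmult antideriv_has_deriv S_cont S_RD0 df S_has_deriv0 f)
    then show ?thesis by simp
  qed
  then have const: "h x = h y" for x y using DERIV_isconst_all by blast
  obtain C where C: "\<forall>t<0. \<bar>t\<bar>^1 * \<bar>h t\<bar> \<le> C" using S_RD0[OF hS] unfolding RD_def by blast
  have "h 0 = 0"
  proof (rule ccontr)
    assume ne: "h 0 \<noteq> 0"
    define t where "t = - (\<bar>C\<bar> + 1) / \<bar>h 0\<bar>"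
    have "t < 0" unfolding t_def using ne by (intro divide_neg_pos) auto
    then have "\<bar>t\<bar> * \<bar>h 0\<bar> \<le> C" using C const[of t 0] by auto
    moreover have "\<bar>t\<bar> * \<bar>h 0\<bar> = \<bar>C\<bar> + 1" using ne by (simp add: t_def)
    ultimately show False by linarith
  qed
  then have "h x = 0" for x using const by metis
  then show ?thesis unfolding h_def by (intro ext) (simp add: algebra_simps)
qed

lemma antideriv_pow_S: "f \<in> Sminus \<Longrightarrow> (antideriv ^^ m) f \<in> Sminus"
  by (induction m) (auto intro: antideriv_S)

lemma dk_S: "f \<in> Sminus \<Longrightarrow> dk n f \<in> Sminus"
proof -
  assume f: "f \<in> Sminus"
  have "(deriv ^^ m) f \<in> Sminus" for m by (induction m) (auto intro: deriv_S f)
  then show ?thesis unfolding dk_def using antideriv_pow_S[OF f] by auto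
qed

lemma dk_add:
  assumes f: "f \<in> Sminus" and g: "g \<in> Sminus"
  shows "dk n (\<lambda>t. f t + g t) = (\<lambda>t. dk n f t + dk n g t)"
proof -
  have "(antideriv ^^ m) (\<lambda>t. f t + g t) = (\<lambda>t. (antideriv ^^ m) f t + (antideriv ^^ m) g t)" for m
  proof (induction m)
    case 0 then show ?case by simp
  next
    case (Suc m)
    then show ?case by (simp add: antideriv_add antideriv_pow_S f g)
  qed
  then show ?thesis unfolding dk_def using S_add(2)[OF f g] by auto
qed

lemma dk_cmult:
  assumes f: "f \<in> Sminus"
  shows "dk n (\<lambda>t. c * f t) = (\<lambda>t. c * dk n f t)"
proof -
  have "(antideriv ^^ m) (\<lambda>t. c * f t) = (\<lambda>t. c * (antideriv ^^ m) f t)" for m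
  proof (induction m)
    case 0 then show ?case by simp
  next
    case (Suc m)
    then show ?case by (simp add: antideriv_cmult)
  qed
  then show ?thesis unfolding dk_def using S_cmult(2)[OF f] by auto
qed

lemma deriv_dk:
  assumes f: "f \<in> Sminus"
  shows "deriv (dk n f) = dk (n + 1) f"
proof (cases "0 \<le> n")
  case True
  then have "nat (n + 1) = Suc (nat n)" by simp
  then show ?thesis using True unfolding dk_def by simp
next
  case False
  then obtain m where m: "nat (-n) = Suc m" by (metis neg_0_less_iff_less nat_0_less_mult_iff not0_implies_Suc not_le zero_less_nat_eq zero_neq_one mult_1 less_numeral_extra(3) gr0_conv_Suc)
  have "deriv (dk n f) = deriv (antideriv ((antideriv ^^ m) f))" unfolding dk_def using False m by simp
  also have "\<dots> = (antideriv ^^ m) f" by (rule antideriv_S(2)[OF antideriv_pow_S[OF f]])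
  also have "\<dots> = dk (n + 1) f"
  proof -
    have "int (nat (-n)) = -n" using False by simp
    then have mn: "int m = -n - 1" using m by simp
    show ?thesis
    proof (cases "0 \<le> n + 1")
      case True
      then have "m = 0" "n + 1 = 0" using mn by linarith+
      then show ?thesis unfolding dk_def using True by simp
    next
      case False
      have "nat (-n - 1) = m" using mn[symmetric] by simp
      then show ?thesis unfolding dk_def using False by simp
    qed
  qed
  finally show ?thesis .
qed

lemma dk_deriv:
  assumes f: "f \<in> Sminus"
  shows "dk n (deriv f) = dk (n + 1) f"
proof (cases "0 \<le> n")
  case True
  then have "nat (n + 1) = Suc (nat n)" by simp
  then show ?thesis using True unfolding dk_def by (simp add: funpow_Suc_right del: funpow.simps)
next
  case False
  then obtain m where m: "nat (-n) = Suc m" by (metis neg_0_less_iff_less nat_0_less_mult_iff not0_implies_Suc not_le zero_less_nat_eq zero_neq_one mult_1 less_numeral_extra(3) gr0_conv_Suc)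
  have "dk n (deriv f) = (antideriv ^^ m) (antideriv (deriv f))" unfolding dk_def using False m
    by (simp add: funpow_Suc_right del: funpow.simps)
  also have "\<dots> = (antideriv ^^ m) f" by (simp add: antideriv_deriv f)
  also have "\<dots> = dk (n + 1) f"
  proof -
    have "int (nat (-n)) = -n" using False by simp
    then have mn: "int m = -n - 1" using m by simp
    show ?thesis
    proof (cases "0 \<le> n + 1")
      case True
      then have "m = 0" "n + 1 = 0" using mn by linarith+
      then show ?thesis unfolding dk_def using True by simp
    next
      case False
      have "nat (-n - 1) = m" using mn[symmetric] by simp
      then show ?thesis unfolding dk_def using False by simp
    qed
  qed
  finally show ?thesis .
qed

lemma deriv_add_S: "v \<in> Sminus \<Longrightarrow> w \<in> Sminus \<Longrightarrow> deriv (\<lambda>t. v t + w t) = (\<lambda>t. deriv v t + deriv w t)"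
  using S_add(2)[of v w 1] by simp

lemma deriv_cmult_S: "v \<in> Sminus \<Longrightarrow> deriv (\<lambda>t. c * v t) = (\<lambda>t. c * deriv v t)"
  using S_cmult(2)[of v 1 c] by simp

lemma bracket_S: "v \<in> Sminus \<Longrightarrow> w \<in> Sminus \<Longrightarrow> bracket k s v w \<in> Sminus"
  unfolding bracket_def by (intro S_add S_mult S_cmult deriv_S dk_S)

lemma gen_S: "f \<in> Sminus \<Longrightarrow> gen p k s f \<in> Sminus"
  by (induction p) (auto intro: bracket_S)

lemma bracket_bilinear: "bilinear_on Sminus (bracket k s)"
  unfolding bilinear_on_def
  apply (intro conjI ballI bracket_S, assumption+)
  by (auto intro!: ext simp: bracket_def deriv_add_S deriv_cmult_S dk_add dk_cmult algebra_simps)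

lemma chain:
  assumes g: "g \<in> Sminus"
  shows "deriv (bracket k s g g) =
           (\<lambda>t. bracket (k + 1) s g g t + bracket (k - 1) s (deriv g) (deriv g) t)"
proof (rule ext, rule DERIV_imp_deriv)
  fix t
  have dg: "deriv g \<in> Sminus" by (rule deriv_S[OF g])
  have e1: "deriv (dk (k - 1) g) = dk k g" using deriv_dk[OF g, of "k-1"] by simp
  have e2: "deriv (dk k g) = dk (k+1) g" using deriv_dk[OF g, of k] by simp
  have e3: "dk (k - 2) (deriv g) = dk (k - 1) g" using dk_deriv[OF g, of "k-2"] by simp
  have e4: "dk (k - 1) (deriv g) = dk k g" using dk_deriv[OF g, of "k-1"] by simp
  have "(bracket k s g g has_real_derivative
     (deriv (deriv g) t * dk (k - 1) g t + deriv (dk (k - 1) g) t * deriv g t)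
     + s * (deriv g t * dk k g t + deriv (dk k g) t * g t)) (at t)"
    unfolding bracket_def
    by (intro DERIV_add DERIV_mult DERIV_cmult S_has_deriv0 dg dk_S g)
  then show "(bracket k s g g has_real_derivative
     bracket (k + 1) s g g t + bracket (k - 1) s (deriv g) (deriv g) t) (at t)"
    unfolding e1 e2 by (simp add: bracket_def e3 e4 algebra_simps)
qed

theorem proposition3:
  fixes p :: nat and k :: int and s :: real
  assumes "s = 1 \<or> s = -1"
  shows "bilinear_on Sminus (bracket k s) \<and>
    (\<forall>f\<in>Sminus.
       let g = (if p = 0 then f else gen (p - 1) k s f) in
         g \<in> Sminus \<and>
         gen p k s f = bracket k s g g \<and>
         deriv (bracket k s g g) =
           (\<lambda>t. bracket (k + 1) s g g t + bracket (k - 1) s (deriv g) (deriv g) t))"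
proof (intro conjI ballI bracket_bilinear)
  fix f assume f: "f \<in> Sminus"
  define g where "g = (if p = 0 then f else gen (p - 1) k s f)"
  have gS: "g \<in> Sminus" unfolding g_def using f gen_S by auto
  have "gen p k s f = bracket k s g g" unfolding g_def by (cases p) auto
  then show "let g = (if p = 0 then f else gen (p - 1) k s f) in
         g \<in> Sminus \<and>
         gen p k s f = bracket k s g g \<and>
         deriv (bracket k s g g) =
           (\<lambda>t. bracket (k + 1) s g g t + bracket (k - 1) s (deriv g) (deriv g) t)"
    unfolding Let_def g_def[symmetric] using gS chain[OF gS] by blast
qed

end
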